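(* Let $f:X\to Y$ be a continuous map of sober topological spaces which is an epimorphism in the category of sober spaces and continuous maps, and suppose that $X$ is noetherian. Then $f$ is surjective.
   Context: A topological space is sober if every irreducible closed subset has a unique generic point. A topological space is noetherian if every descending chain of closed subsets stabilizes. *)

theory Defs
  imports "HOL-Analysis.Analysis"
begin

definition irreducible_in :: "'a topology \<Rightarrow> 'a set \<Rightarrow> bool" where
  "irreducible_in X S \<longleftrightarrow> S \<subseteq> topspace X \<and> S \<noteq> {} \<and>
     (\<forall>C1 C2. closedin X C1 \<and> closedin X C2 \<and> S \<subseteq> C1 \<union> C2 \<longrightarrow> S \<subseteq> C1 \<or> S \<subseteq> C2)"

definition generic_point :: "'a topology \<Rightarrow> 'a set \<Rightarrow> 'a \<Rightarrow> bool" where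
  "generic_point X S x \<longleftrightarrow> x \<in> topspace X \<and> X closure_of {x} = S"

definition sober :: "'a topology \<Rightarrow> bool" where
  "sober X \<longleftrightarrow> (\<forall>S. closedin X S \<and> irreducible_in X S \<longrightarrow> (\<exists>!x. generic_point X S x))"

definition noetherian_space :: "'a topology \<Rightarrow> bool" where
  "noetherian_space X \<longleftrightarrow>
     (\<forall>C :: nat \<Rightarrow> 'a set. (\<forall>n. closedin X (C n)) \<and> decseq C \<longrightarrow> (\<exists>N. \<forall>n\<ge>N. C n = C N))"

text \<open>Epimorphism in the category of sober spaces, tested against sober spaces whose points
  live in the type the type of sets of points of Y.\<close>
definition sober_epi :: "'a topology \<Rightarrow> 'b topology \<Rightarrow> ('a \<Rightarrow> 'b) \<Rightarrow> bool" where
  "sober_epi X Y f \<longleftrightarrow> sober X \<and> sober Y \<and> continuous_map X Y f \<and>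
     (\<forall>(Z :: 'b set topology) g h.
        sober Z \<and> continuous_map Y Z g \<and> continuous_map Y Z h \<and>
        (\<forall>x\<in>topspace X. g (f x) = h (f x)) \<longrightarrow> (\<forall>y\<in>topspace Y. g y = h y))"

end

theory Submission
  imports Defs
begin
lemma T1: "S \<in> {{}, {UNIV::'b set}, {{},UNIV}} \<Longrightarrow> T \<in> {{}, {UNIV}, {{},UNIV}} \<Longrightarrow> S \<inter> T \<in> {{}, {UNIV}, {{},UNIV}}"
  by auto
lemma T2: "(S \<subseteq> {{}, UNIV::'b set} \<and> ({{},UNIV} - S) \<in> {{}, {UNIV}, {{},UNIV}}) \<longleftrightarrow> (S = {} \<or> S = {{}} \<or> S = {{},UNIV})"
  by auto


definition sierp :: "'b set topology" where
  "sierp = topology (\<lambda>S. S \<in> {{}, {UNIV}, {{},UNIV}})"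

lemma T3:
  fixes K :: "'b set set set"
  assumes K: "K \<subseteq> {{}, {UNIV}, {{}, UNIV}}"
  shows "\<Union> K \<in> {{}, {UNIV}, {{}, UNIV}}"
proof (cases "{} \<in> \<Union>K")
  case True
  then obtain S where "S \<in> K" "{} \<in> S" by blast
  with K have "S = {{},UNIV}" by blast
  with \<open>S \<in> K\<close> K have "\<Union>K = {{},UNIV}" by blast
  then show ?thesis by simp
next
  case False
  with K have "\<Union>K \<subseteq> {UNIV}" by blast
  then have "\<Union>K = {} \<or> \<Union>K = {UNIV}" by (simp add: subset_singleton_iff)
  then show ?thesis by (elim disjE) simp_all
qed

lemma istop_sierp: "istopology (\<lambda>S::'b set set. S \<in> {{}, {UNIV}, {{},UNIV}})"
  unfolding istopology_def
proof (intro conjI allI impI)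
  fix S T :: "'b set set"
  assume "S \<in> {{}, {UNIV}, {{},UNIV}}" "T \<in> {{}, {UNIV}, {{},UNIV}}"
  then show "S \<inter> T \<in> {{}, {UNIV}, {{},UNIV}}" by (rule T1)
next
  fix K :: "'b set set set" assume "\<forall>S\<in>K. S \<in> {{}, {UNIV}, {{}, UNIV}}"
  then have K: "K \<subseteq> {{}, {UNIV}, {{}, UNIV}}" by (simp only: subset_iff Ball_def)
  then show "\<Union> K \<in> {{}, {UNIV}, {{}, UNIV}}" by (rule T3)
qed

lemma openin_sierp: "openin sierp S \<longleftrightarrow> S \<in> {{}, {UNIV}, {{},UNIV}}"
  unfolding sierp_def topology_inverse'[OF istop_sierp] ..

lemma topspace_sierp: "topspace sierp = {{},UNIV}"
proof -
  have "{{},UNIV} \<subseteq> topspace sierp" by (rule openin_subset) (simp add: openin_sierp)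
  moreover have "openin sierp (topspace sierp)" by simp
  then have "topspace sierp \<in> {{}, {UNIV}, {{},UNIV}}" by (simp only: openin_sierp)
  ultimately show ?thesis by blast
qed

lemma closedin_sierp: "closedin sierp S \<longleftrightarrow> S = {} \<or> S = {{}} \<or> S = {{},UNIV}"
  unfolding closedin_def openin_sierp topspace_sierp by (rule T2)

lemma cl1: "sierp closure_of {{}} = {{}}"
  by (simp add: closure_of_closedin closedin_sierp)

lemma cl2: "sierp closure_of {UNIV} = {{},UNIV}"
proof -
  have "{UNIV} \<subseteq> sierp closure_of {UNIV}"
    by (rule closure_of_subset) (simp add: topspace_sierp)
  moreover have "closedin sierp (sierp closure_of {UNIV})" by simp
  ultimately show ?thesis unfolding closedin_sierp by blast
qed

lemma ne: "{} \<noteq> (UNIV :: 'b set)" by simp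
lemma ne2: "{{}} \<noteq> {{}, UNIV :: 'b set}"
proof
  assume "{{}} = {{}, UNIV :: 'b set}"
  then have "(UNIV::'b set) \<in> {{}}" by (simp only: insert_iff simp_thms)
  then show False by simp
qed

lemma sober_sierp: "sober (sierp :: 'b set topology)"
  unfolding sober_def
proof (intro allI impI)
  fix S :: "'b set set" assume a: "closedin sierp S \<and> irreducible_in sierp S"
  then have "S = {{}} \<or> S = {{},UNIV}" unfolding closedin_sierp irreducible_in_def by blast
  then show "\<exists>!x. generic_point sierp S x"
  proof
    assume S: "S = {{}}"
    show ?thesis
    proof (rule ex1I[of _ "{}"])
      show "generic_point sierp S {}" unfolding generic_point_def topspace_sierp S cl1 by simp
      fix x assume "generic_point sierp S x"
      then have "x = {} \<or> x = UNIV" "sierp closure_of {x} = {{}}" unfolding generic_point_def topspace_sierp S by blast+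
      then show "x = {}" using cl2 ne2 by (metis (no_types))
    qed
  next
    assume S: "S = {{},UNIV}"
    show ?thesis
    proof (rule ex1I[of _ "UNIV"])
      show "generic_point sierp S UNIV" unfolding generic_point_def topspace_sierp S cl2 by simp
      fix x assume "generic_point sierp S x"
      then have "x = {} \<or> x = UNIV" "sierp closure_of {x} = {{},UNIV}" unfolding generic_point_def topspace_sierp S by blast+
      then show "x = UNIV" using cl1 ne2 by (metis (no_types))
    qed
  qed
qed


lemma cont_sierp:
  assumes "openin Y U"
  shows "continuous_map Y (sierp :: 'b set topology) (\<lambda>p. if p \<in> U then UNIV else {})"
  unfolding continuous_map_def topspace_sierp Pi_iff
proof (intro conjI ballI allI impI)
  fix x assume "x \<in> topspace Y"
  show "(if x \<in> U then UNIV else {}) \<in> {{}, UNIV :: 'b set}" by simp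
next
  fix W :: "'b set set" assume "openin sierp W"
  then have "W = {} \<or> W = {UNIV} \<or> W = {{},UNIV}" by (simp add: openin_sierp)
  then show "openin Y {x \<in> topspace Y. (if x \<in> U then UNIV else {}) \<in> W}"
  proof (elim disjE)
    assume "W = {}" then show ?thesis by simp
  next
    assume W: "W = {UNIV}"
    have "{x \<in> topspace Y. (if x \<in> U then UNIV else {}) \<in> W} = U"
      using W openin_subset[OF assms] by (intro set_eqI) (simp split: if_split, blast)
    then show ?thesis using assms by simp
  next
    assume W: "W = {{},UNIV}"
    have "{x \<in> topspace Y. (if x \<in> U then UNIV else {}) \<in> W} = topspace Y"
      using W by (intro set_eqI) (simp split: if_split)
    then show ?thesis by simp
  qed
qed

lemma noeth_min:
  assumes noe: "noetherian_space X" and P0: "P B0" and Pc: "\<And>B. P B \<Longrightarrow> closedin X B"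
  shows "\<exists>B. P B \<and> (\<forall>B'. P B' \<and> B' \<subseteq> B \<longrightarrow> B' = B)"
proof (rule ccontr)
  assume nt: "\<not> ?thesis"
  have ex: "\<exists>B'. P B' \<and> B' \<subset> B" if "P B" for B
  proof -
    from nt that obtain B' where "P B'" "B' \<subseteq> B" "B' \<noteq> B" by blast
    then show ?thesis by blast
  qed
  define nxt where "nxt B = (SOME B'. P B' \<and> B' \<subset> B)" for B
  have nxt: "P (nxt B) \<and> nxt B \<subset> B" if "P B" for B
    unfolding nxt_def by (rule someI_ex) (rule ex[OF that])
  define seq where "seq = rec_nat B0 (\<lambda>_ B. nxt B)"
  have seq0: "seq 0 = B0" and seqS: "seq (Suc n) = nxt (seq n)" for n
    unfolding seq_def by simp_all
  have Ps: "P (seq n)" for n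
  proof (induction n)
    case 0 then show ?case using P0 seq0 by simp
  next
    case (Suc n) then show ?case using nxt[of "seq n"] seqS[of n] by simp
  qed
  have lt: "seq (Suc n) \<subset> seq n" for n
    using nxt[OF Ps[of n]] by (simp add: seqS)
  have "decseq seq" using lt by (intro decseq_SucI) (simp add: psubset_eq)
  moreover have "\<forall>n. closedin X (seq n)" using Ps Pc by simp
  ultimately have "\<exists>N. \<forall>n\<ge>N. seq n = seq N"
    by (intro noe[unfolded noetherian_space_def, THEN spec, of seq, THEN mp] conjI)
  then obtain N where "\<forall>n\<ge>N. seq n = seq N" ..
  then have "seq (Suc N) = seq N" using le_Suc_eq by blast
  with lt[of N] show False by simp
qed

lemma irred_closure_pt:
  assumes "y \<in> topspace Y"
  shows "irreducible_in Y (Y closure_of {y})"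
  unfolding irreducible_in_def
proof (intro conjI allI impI)
  show "Y closure_of {y} \<subseteq> topspace Y" by (rule closure_of_subset_topspace)
  have "y \<in> Y closure_of {y}" using closure_of_subset[of "{y}" Y] assms by simp
  then show "Y closure_of {y} \<noteq> {}" by blast
  fix C1 C2 assume a: "closedin Y C1 \<and> closedin Y C2 \<and> Y closure_of {y} \<subseteq> C1 \<union> C2"
  with \<open>y \<in> Y closure_of {y}\<close> have "y \<in> C1 \<or> y \<in> C2" by blast
  then show "Y closure_of {y} \<subseteq> C1 \<or> Y closure_of {y} \<subseteq> C2"
    using a closure_of_minimal[of "{y}"] by blast
qed

theorem proposition1p7:
  fixes X :: "'a topology" and Y :: "'b topology" and f :: "'a \<Rightarrow> 'b"
  assumes "sober X" and "sober Y" and "continuous_map X Y f"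
    and "sober_epi X Y f"
    and "noetherian_space X"
  shows "f ` topspace X = topspace Y"
proof (rule ccontr)
  note contf = assms(3)
  have sub: "f ` topspace X \<subseteq> topspace Y" using contf by (simp add: continuous_map_image_subset_topspace)
  assume "f ` topspace X \<noteq> topspace Y"
  with sub obtain y where y: "y \<in> topspace Y" "y \<notin> f ` topspace X" by blast
  define C where "C = Y closure_of {y}"
  have Ccl: "closedin Y C" unfolding C_def by simp
  have yC: "y \<in> C" unfolding C_def using closure_of_subset[of "{y}" Y] y by simp
  have step1: "y \<in> Y closure_of (C \<inter> f ` topspace X)"
  proof (rule ccontr)
    define D where "D = Y closure_of (C \<inter> f ` topspace X)"
    assume "y \<notin> Y closure_of (C \<inter> f ` topspace X)"
    then have yD: "y \<notin> D" unfolding D_def .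
    have DC: "D \<subseteq> C" unfolding D_def using Ccl by (simp add: closure_of_minimal)
    have Dcl: "closedin Y D" unfolding D_def by simp
    define U where "U = topspace Y - D"
    define V where "V = topspace Y - C"
    have oU: "openin Y U" unfolding U_def using Dcl by auto
    have oV: "openin Y V" unfolding V_def using Ccl by auto
    define g :: "'b \<Rightarrow> 'b set" where "g p = (if p \<in> U then UNIV else {})" for p
    define h :: "'b \<Rightarrow> 'b set" where "h p = (if p \<in> V then UNIV else {})" for p
    have cg: "continuous_map Y sierp g" unfolding g_def by (rule cont_sierp[OF oU])
    have ch: "continuous_map Y sierp h" unfolding h_def by (rule cont_sierp[OF oV])
    have agree: "\<forall>x\<in>topspace X. g (f x) = h (f x)"
    proof
      fix x assume x: "x \<in> topspace X"
      have fx: "f x \<in> topspace Y" using sub x by blast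
      show "g (f x) = h (f x)"
      proof (cases "f x \<in> C")
        case True
        then have "f x \<in> D" unfolding D_def
          using closure_of_subset[of "C \<inter> f ` topspace X" Y] x Ccl closedin_subset by blast
        then show ?thesis using True unfolding g_def h_def U_def V_def by simp
      next
        case False
        then have "f x \<notin> D" using DC by blast
        then show ?thesis using False fx unfolding g_def h_def U_def V_def by simp
      qed
    qed
    have "g y = h y"
      using assms(4) sober_sierp cg ch agree y(1) unfolding sober_epi_def by blast
    moreover have "g y = UNIV" unfolding g_def U_def using y(1) yD by simp
    moreover have "h y = {}" unfolding h_def V_def using yC by simp
    ultimately show False by simp
  qed
  define B0 where "B0 = {x \<in> topspace X. f x \<in> C}"
  have B0cl: "closedin X B0" unfolding B0_def
    by (rule closedin_continuous_map_preimage[OF contf Ccl])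
  have fB0: "f ` B0 = C \<inter> f ` topspace X" unfolding B0_def by auto
  define P where "P B \<longleftrightarrow> closedin X B \<and> B \<subseteq> B0 \<and> y \<in> Y closure_of (f ` B)" for B
  have "P B0" unfolding P_def using B0cl fB0 step1 by simp
  then obtain B where PB: "P B" and minB: "\<forall>B'. P B' \<and> B' \<subseteq> B \<longrightarrow> B' = B"
    using noeth_min[OF assms(5), of P B0] unfolding P_def by blast
  have Bcl: "closedin X B" and BB0: "B \<subseteq> B0" and yB: "y \<in> Y closure_of (f ` B)"
    using PB unfolding P_def by auto
  have irr: "irreducible_in X B"
    unfolding irreducible_in_def
  proof (intro conjI allI impI)
    show "B \<subseteq> topspace X" using Bcl by (rule closedin_subset)
    show "B \<noteq> {}" using yB by auto
    fix C1 C2 assume a: "closedin X C1 \<and> closedin X C2 \<and> B \<subseteq> C1 \<union> C2"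
    then have "f ` B = f ` (B \<inter> C1) \<union> f ` (B \<inter> C2)" by blast
    then have "y \<in> Y closure_of (f ` (B \<inter> C1)) \<or> y \<in> Y closure_of (f ` (B \<inter> C2))"
      using yB by simp
    then show "B \<subseteq> C1 \<or> B \<subseteq> C2"
    proof
      assume "y \<in> Y closure_of (f ` (B \<inter> C1))"
      then have "P (B \<inter> C1)" unfolding P_def using a Bcl BB0 by auto
      then have "B \<inter> C1 = B" using minB by blast
      then show ?thesis by blast
    next
      assume "y \<in> Y closure_of (f ` (B \<inter> C2))"
      then have "P (B \<inter> C2)" unfolding P_def using a Bcl BB0 by auto
      then have "B \<inter> C2 = B" using minB by blast
      then show ?thesis by blast
    qed
  qed
  obtain x where x: "x \<in> topspace X" "X closure_of {x} = B"
    using assms(1) Bcl irr unfolding sober_def generic_point_def by blast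
  have "f ` B \<subseteq> Y closure_of {f x}"
    using continuous_map_image_closure_subset[OF contf, of "{x}"] x(2) by simp
  then have "Y closure_of (f ` B) \<subseteq> Y closure_of {f x}"
    by (simp add: closure_of_minimal)
  with yB have y1: "y \<in> Y closure_of {f x}" by blast
  have xB: "x \<in> B" using x closure_of_subset[of "{x}" X] by auto
  have fxC: "f x \<in> C" using xB BB0 unfolding B0_def by blast
  have fxY: "f x \<in> topspace Y" using sub x(1) by blast
  have "Y closure_of {f x} \<subseteq> C" using fxC Ccl by (simp add: closure_of_minimal)
  moreover have "C \<subseteq> Y closure_of {f x}" unfolding C_def using y1 by (simp add: closure_of_minimal)
  ultimately have eq: "Y closure_of {f x} = C" by blast
  have "\<exists>!z. generic_point Y C z"
    using assms(2) Ccl irred_closure_pt[OF y(1)] unfolding sober_def C_def by blast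
  moreover have "generic_point Y C y" unfolding generic_point_def C_def using y(1) by simp
  moreover have "generic_point Y C (f x)" unfolding generic_point_def using fxY eq by simp
  ultimately have "y = f x" by blast
  with y(2) x(1) show False by blast
qed

end
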